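(* Let $S=K[x_1,\ldots,x_n]$ and $A\subseteq sm(S)_2$. Then (1) $A$ is upper perfect if and only if $\omega(\overline{\tau(A)})\le 2$, where $\overline{\tau(A)}$ is the complement graph of $\tau(A)$ and $\omega$ denotes the clique number; (2) $A$ is lower perfect if and only if for each $i\in[n]$, the degree of $v_i$ in $\overline{\tau(A)}$ is less than $n-1$.
   Context: $K$ is a field and $sm(S)_d$ is the set of square-free monomials of degree $d$ in $S$. For $A\subseteq sm(S)_2$: $A$ is upper perfect if $\{gx_i\mid g\in A,\ x_i\nmid g\}=sm(S)_3$, and lower perfect if $\{h\ne 1\mid h=g/x_i \text{ for some } g\in A,\ x_i\mid g\}=sm(S)_1$. $\tau(A)$ is the graph with vertex set $\{v_1,\ldots,v_n\}$ in which $v_iv_j$ is an edge if and only if $x_ix_j\in A$. *)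

theory Defs
  imports Main "HOL-Library.Multiset"
begin

text \<open>Monomials in S = K[x_1,...,x_n] are encoded as multisets of variable
indices (the exponent vector): the monomial x_{i_1}...x_{i_k} is the multiset
{#i_1,...,i_k#}. Multiplication is multiset sum, x_i divides g iff i is in g,
g/x_i is g minus one copy of i, and the monomial 1 is the empty multiset.
The field K plays no role in these purely combinatorial notions.\<close>

definition sm :: "nat \<Rightarrow> nat \<Rightarrow> nat multiset set" where
  "sm n d = {m. set_mset m \<subseteq> {1..n} \<and> (\<forall>i. count m i \<le> 1) \<and> size m = d}"

definition upper_perfect :: "nat \<Rightarrow> nat multiset set \<Rightarrow> bool" where
  "upper_perfect n A \<longleftrightarrow>
     {g + {#i#} | g i. g \<in> A \<and> i \<in> {1..n} \<and> i \<notin># g} = sm n 3"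

definition lower_perfect :: "nat \<Rightarrow> nat multiset set \<Rightarrow> bool" where
  "lower_perfect n A \<longleftrightarrow>
     {h. h \<noteq> {#} \<and> (\<exists>g\<in>A. \<exists>i\<in>{1..n}. i \<in># g \<and> h = g - {#i#})} = sm n 1"

definition tau :: "nat \<Rightarrow> nat multiset set \<Rightarrow> nat \<Rightarrow> nat \<Rightarrow> bool" where
  "tau n A i j \<longleftrightarrow> i \<in> {1..n} \<and> j \<in> {1..n} \<and> i \<noteq> j \<and> {#i, j#} \<in> A"

definition complement_graph :: "'v set \<Rightarrow> ('v \<Rightarrow> 'v \<Rightarrow> bool) \<Rightarrow> 'v \<Rightarrow> 'v \<Rightarrow> bool" where
  "complement_graph V E u v \<longleftrightarrow> u \<in> V \<and> v \<in> V \<and> u \<noteq> v \<and> \<not> E u v"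

definition is_clique :: "'v set \<Rightarrow> ('v \<Rightarrow> 'v \<Rightarrow> bool) \<Rightarrow> 'v set \<Rightarrow> bool" where
  "is_clique V E C \<longleftrightarrow> C \<subseteq> V \<and> (\<forall>x\<in>C. \<forall>y\<in>C. x \<noteq> y \<longrightarrow> E x y)"

definition clique_number :: "'v set \<Rightarrow> ('v \<Rightarrow> 'v \<Rightarrow> bool) \<Rightarrow> nat" where
  "clique_number V E = Max {card C | C. is_clique V E C}"

definition degree :: "'v set \<Rightarrow> ('v \<Rightarrow> 'v \<Rightarrow> bool) \<Rightarrow> 'v \<Rightarrow> nat" where
  "degree V E v = card {u \<in> V. E v u}"

end

theory Submission
  imports Defs
begin

lemma sm1: "m \<in> sm n 1 \<longleftrightarrow> (\<exists>a\<in>{1..n}. m = {#a#})"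
proof
  assume "m \<in> sm n 1"
  then have s: "set_mset m \<subseteq> {1..n}" "size m = 1" by (auto simp: sm_def)
  then obtain a N where "m = add_mset a N" "size N = 0"
    using size_eq_Suc_imp_eq_union[of m 0] by auto
  then show "\<exists>a\<in>{1..n}. m = {#a#}" using s by auto
qed (auto simp: sm_def)

lemma sm2: "m \<in> sm n 2 \<longleftrightarrow> (\<exists>a b. a \<noteq> b \<and> a \<in> {1..n} \<and> b \<in> {1..n} \<and> m = {#a,b#})"
proof
  assume "m \<in> sm n 2"
  then have s: "set_mset m \<subseteq> {1..n}" "\<forall>i. count m i \<le> 1" "size m = 2" by (auto simp: sm_def)
  then obtain a N where N: "m = add_mset a N" "size N = 1"
    using size_eq_Suc_imp_eq_union[of m 1] by auto
  then obtain b M where M: "N = add_mset b M" "size M = 0"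
    using size_eq_Suc_imp_eq_union[of N 0] by auto
  have "a \<noteq> b" proof assume "a = b" then show False using s(2) N M by (auto dest: spec[of _ a]) qed
  then show "\<exists>a b. a \<noteq> b \<and> a \<in> {1..n} \<and> b \<in> {1..n} \<and> m = {#a,b#}" using s N M by auto
qed (auto simp: sm_def)

lemma sm3: "m \<in> sm n 3 \<longleftrightarrow> (\<exists>a b c. a \<noteq> b \<and> a \<noteq> c \<and> b \<noteq> c \<and> a \<in> {1..n} \<and> b \<in> {1..n} \<and> c \<in> {1..n} \<and> m = {#a,b,c#})"
proof
  assume "m \<in> sm n 3"
  then have s: "set_mset m \<subseteq> {1..n}" "\<forall>i. count m i \<le> 1" "size m = 3" by (auto simp: sm_def)
  then obtain a N where N: "m = add_mset a N" "size N = 2"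
    using size_eq_Suc_imp_eq_union[of m 2] by auto
  then obtain b M where M: "N = add_mset b M" "size M = 1"
    using size_eq_Suc_imp_eq_union[of N 1] by auto
  then obtain c L where L: "M = add_mset c L" "size L = 0"
    using size_eq_Suc_imp_eq_union[of M 0] by auto
  have m: "m = {#a,b,c#}" using N M L by auto
  have "a \<noteq> b" proof assume "a = b" then show False using s(2) m by (auto dest: spec[of _ a]) qed
  moreover have "a \<noteq> c" proof assume "a = c" then show False using spec[OF s(2), of c] m by (auto split: if_splits) qed
  moreover have "b \<noteq> c" proof assume "b = c" then show False using spec[OF s(2), of c] m by (auto split: if_splits) qed
  ultimately show "\<exists>a b c. a \<noteq> b \<and> a \<noteq> c \<and> b \<noteq> c \<and> a \<in> {1..n} \<and> b \<in> {1..n} \<and> c \<in> {1..n} \<and> m = {#a,b,c#}"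
    using s m by auto
qed (auto simp: sm_def)

lemma upper_iff:
  assumes A: "A \<subseteq> sm n 2"
  shows "upper_perfect n A \<longleftrightarrow> (\<forall>a\<in>{1..n}. \<forall>b\<in>{1..n}. \<forall>c\<in>{1..n}.
           a \<noteq> b \<and> a \<noteq> c \<and> b \<noteq> c \<longrightarrow> {#a,b#} \<in> A \<or> {#a,c#} \<in> A \<or> {#b,c#} \<in> A)"
  (is "_ \<longleftrightarrow> ?T")
proof
  assume up: "upper_perfect n A"
  show ?T
  proof (intro ballI impI)
    fix a b c assume r: "a \<in> {1..n}" "b \<in> {1..n}" "c \<in> {1..n}" and d: "a \<noteq> b \<and> a \<noteq> c \<and> b \<noteq> c"
    have "{#a,b,c#} \<in> sm n 3" using r d by (subst sm3) blast
    then obtain g i where g: "g \<in> A" "{#a,b,c#} = g + {#i#}"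
      using up unfolding upper_perfect_def by blast
    have i: "i \<in># {#a,b,c#}" using g(2) by simp
    have gg: "g = {#a,b,c#} - {#i#}" using g(2) by simp
    show "{#a,b#} \<in> A \<or> {#a,c#} \<in> A \<or> {#b,c#} \<in> A"
    proof -
      have "i = a \<or> i = b \<or> i = c" using i by auto
      moreover have "i = a \<Longrightarrow> g = {#b,c#}" using gg by simp
      moreover have "i = b \<Longrightarrow> g = {#a,c#}" using gg by (simp add: add_mset_commute)
      moreover have "i = c \<Longrightarrow> g = {#a,b#}" using gg d by (simp add: add_mset_commute)
      ultimately show ?thesis using g(1) by auto
    qed
  qed
next
  assume T: ?T
  show "upper_perfect n A" unfolding upper_perfect_def
  proof (intro equalityI subsetI)
    fix m assume "m \<in> {g + {#i#} |g i. g \<in> A \<and> i \<in> {1..n} \<and> i \<notin># g}"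
    then obtain g i where g: "m = g + {#i#}" "g \<in> A" "i \<in> {1..n}" "i \<notin># g" by blast
    obtain a b where ab: "a \<noteq> b" "a \<in> {1..n}" "b \<in> {1..n}" "g = {#a,b#}" using g(2) A sm2 by blast
    show "m \<in> sm n 3"
    proof -
      have "m = {#a,b,i#}" using g ab by (simp add: add_mset_commute)
      moreover have "i \<noteq> a" "i \<noteq> b" using g ab by auto
      ultimately show ?thesis unfolding sm3 using ab g(3)
        by (intro exI[of _ a] exI[of _ b] exI[of _ i]) auto
    qed
  next
    fix m assume "m \<in> sm n 3"
    then obtain a b c where r: "a \<noteq> b" "a \<noteq> c" "b \<noteq> c" "a \<in> {1..n}" "b \<in> {1..n}" "c \<in> {1..n}" "m = {#a,b,c#}"
      unfolding sm3 by blast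
    then have "{#a,b#} \<in> A \<or> {#a,c#} \<in> A \<or> {#b,c#} \<in> A" using T by blast
    then show "m \<in> {g + {#i#} |g i. g \<in> A \<and> i \<in> {1..n} \<and> i \<notin># g}"
    proof (elim disjE)
      assume "{#a,b#} \<in> A" then show ?thesis using r
      proof -
        have "m = {#a,b#} + {#c#}" using r by (simp add: add_mset_commute)
        moreover have "c \<notin># {#a,b#}" using r by auto
        ultimately show ?thesis using r \<open>{#a,b#} \<in> A\<close> by blast
      qed
    next
      assume "{#a,c#} \<in> A" then show ?thesis using r
      proof -
        have "m = {#a,c#} + {#b#}" using r by (simp add: add_mset_commute)
        moreover have "b \<notin># {#a,c#}" using r by auto
        ultimately show ?thesis using r \<open>{#a,c#} \<in> A\<close> by blast
      qed
    next
      assume "{#b,c#} \<in> A" then show ?thesis using r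
      proof -
        have "m = {#b,c#} + {#a#}" using r by (simp add: add_mset_commute)
        moreover have "a \<notin># {#b,c#}" using r by auto
        ultimately show ?thesis using r \<open>{#b,c#} \<in> A\<close> by blast
      qed
    qed
  qed
qed

lemma clique_le2:
  assumes fin: "finite V" and sym: "\<And>x y. E x y \<Longrightarrow> E y x"
  shows "clique_number V E \<le> 2 \<longleftrightarrow>
    \<not> (\<exists>a\<in>V. \<exists>b\<in>V. \<exists>c\<in>V. a \<noteq> b \<and> a \<noteq> c \<and> b \<noteq> c \<and> E a b \<and> E a c \<and> E b c)"
proof -
  let ?S = "{card C | C. is_clique V E C}"
  have finS: "finite ?S"
  proof (rule finite_subset[of _ "card ` Pow V"])
    show "?S \<subseteq> card ` Pow V" by (auto simp: is_clique_def)
  qed (use fin in auto)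
  have neS: "?S \<noteq> {}" by (auto simp: is_clique_def intro!: exI[of _ "{}"])
  have "clique_number V E \<le> 2 \<longleftrightarrow> (\<forall>C. is_clique V E C \<longrightarrow> card C \<le> 2)"
    unfolding clique_number_def using Max_le_iff[OF finS neS] by blast
  also have "\<dots> \<longleftrightarrow> \<not> (\<exists>a\<in>V. \<exists>b\<in>V. \<exists>c\<in>V. a \<noteq> b \<and> a \<noteq> c \<and> b \<noteq> c \<and> E a b \<and> E a c \<and> E b c)"
  proof
    assume H: "\<forall>C. is_clique V E C \<longrightarrow> card C \<le> 2"
    show "\<not> (\<exists>a\<in>V. \<exists>b\<in>V. \<exists>c\<in>V. a \<noteq> b \<and> a \<noteq> c \<and> b \<noteq> c \<and> E a b \<and> E a c \<and> E b c)"
    proof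
      assume "\<exists>a\<in>V. \<exists>b\<in>V. \<exists>c\<in>V. a \<noteq> b \<and> a \<noteq> c \<and> b \<noteq> c \<and> E a b \<and> E a c \<and> E b c"
      then obtain a b c where t: "a\<in>V" "b\<in>V" "c\<in>V" "a \<noteq> b" "a \<noteq> c" "b \<noteq> c" "E a b" "E a c" "E b c" by blast
      have "is_clique V E {a,b,c}" using t sym unfolding is_clique_def by blast
      moreover have "card {a,b,c} = 3" using t by simp
      ultimately show False using H by fastforce
    qed
  next
    assume N: "\<not> (\<exists>a\<in>V. \<exists>b\<in>V. \<exists>c\<in>V. a \<noteq> b \<and> a \<noteq> c \<and> b \<noteq> c \<and> E a b \<and> E a c \<and> E b c)"
    show "\<forall>C. is_clique V E C \<longrightarrow> card C \<le> 2"
    proof (intro allI impI, rule ccontr)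
      fix C assume C: "is_clique V E C" "\<not> card C \<le> 2"
      have fC: "finite C" using C fin by (meson finite_subset is_clique_def)
      obtain D where D: "D \<subseteq> C" "card D = 3" using obtain_subset_with_card_n[of 3 C] C by force
      then obtain a b c where abc: "D = {a,b,c}" "a \<noteq> b" "a \<noteq> c" "b \<noteq> c" using card_3_iff[of D] by auto
      have inC: "a \<in> C" "b \<in> C" "c \<in> C" using D(1) abc(1) by auto
      have cl: "C \<subseteq> V" "\<forall>x\<in>C. \<forall>y\<in>C. x \<noteq> y \<longrightarrow> E x y" using C(1) unfolding is_clique_def by auto
      have "a \<in> V" "b \<in> V" "c \<in> V" using inC cl(1) by auto
      moreover have "E a b" "E a c" "E b c" using inC cl(2) abc by auto
      ultimately show False using N abc by blast
    qed
  qed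
  finally show ?thesis .
qed

lemma lower_iff:
  assumes A: "A \<subseteq> sm n 2"
  shows "lower_perfect n A \<longleftrightarrow> (\<forall>i\<in>{1..n}. \<exists>j. {#i,j#} \<in> A)"
proof
  assume lp: "lower_perfect n A"
  show "\<forall>i\<in>{1..n}. \<exists>j. {#i,j#} \<in> A"
  proof
    fix i assume i: "i \<in> {1..n}"
    then have "{#i#} \<in> sm n 1" unfolding sm1 by blast
    then obtain g k where g: "g \<in> A" "k \<in># g" "{#i#} = g - {#k#}"
      using lp unfolding lower_perfect_def by blast
    obtain a b where ab: "g = {#a,b#}" using g(1) A sm2 by blast
    have "k = a \<or> k = b" using g(2) ab by auto
    then show "\<exists>j. {#i,j#} \<in> A"
    proof
      assume "k = a" then have "b = i" using g ab by simp
      then show ?thesis using g(1) ab by (auto simp: add_mset_commute)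
    next
      assume "k = b" then have "a = i" using g ab by (simp add: add_mset_commute)
      then show ?thesis using g(1) ab by auto
    qed
  qed
next
  assume H: "\<forall>i\<in>{1..n}. \<exists>j. {#i,j#} \<in> A"
  show "lower_perfect n A" unfolding lower_perfect_def
  proof (intro equalityI subsetI)
    fix h assume "h \<in> {h. h \<noteq> {#} \<and> (\<exists>g\<in>A. \<exists>i\<in>{1..n}. i \<in># g \<and> h = g - {#i#})}"
    then obtain g k where g: "g \<in> A" "k \<in># g" "h = g - {#k#}" by blast
    obtain a b where ab: "a \<noteq> b" "a \<in> {1..n}" "b \<in> {1..n}" "g = {#a,b#}" using g(1) A sm2 by blast
    have "k = a \<or> k = b" using g(2) ab by auto
    then show "h \<in> sm n 1" unfolding sm1 using g ab by (auto simp: add_mset_commute)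
  next
    fix h assume "h \<in> sm n 1"
    then obtain i where i: "i \<in> {1..n}" "h = {#i#}" unfolding sm1 by blast
    obtain j where j: "{#i,j#} \<in> A" using H i by blast
    then have "j \<in> {1..n}" using A unfolding sm_def by auto
    moreover have "h = {#i,j#} - {#j#}" using i by (simp add: add_mset_commute)
    ultimately show "h \<in> {h. h \<noteq> {#} \<and> (\<exists>g\<in>A. \<exists>i\<in>{1..n}. i \<in># g \<and> h = g - {#i#})}"
      using j i by (simp only: mem_Collect_eq) (intro conjI bexI[of _ "{#i,j#}"] bexI[of _ j], auto)
  qed
qed

lemma degree_iff:
  assumes i: "i \<in> {1..n}"
  shows "degree {1..n} (complement_graph {1..n} E) i < n - 1 \<longleftrightarrow> (\<exists>j\<in>{1..n}. j \<noteq> i \<and> E i j)"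
proof -
  let ?D = "{u \<in> {1..n}. complement_graph {1..n} E i u}"
  have D: "?D = {1..n} - {i} - {j. E i j}" using i unfolding complement_graph_def by auto
  have c: "card ({1..n} - {i}) = n - 1" using i by simp
  show ?thesis
  proof
    assume "degree {1..n} (complement_graph {1..n} E) i < n - 1"
    then have "card ?D < n - 1" unfolding degree_def .
    then have "?D \<noteq> {1..n} - {i}" using c by (metis less_irrefl)
    then show "\<exists>j\<in>{1..n}. j \<noteq> i \<and> E i j" unfolding D by blast
  next
    assume "\<exists>j\<in>{1..n}. j \<noteq> i \<and> E i j"
    then obtain j where j: "j \<in> {1..n}" "j \<noteq> i" "E i j" by blast
    have "?D \<subset> {1..n} - {i}" unfolding D using j by blast
    then have "card ?D < card ({1..n} - {i})" by (intro psubset_card_mono) auto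
    then show "degree {1..n} (complement_graph {1..n} E) i < n - 1" unfolding degree_def using c by simp
  qed
qed

lemma tri: "(\<forall>a\<in>V. \<forall>b\<in>V. \<forall>c\<in>V. a \<noteq> b \<and> a \<noteq> c \<and> b \<noteq> c \<longrightarrow> P a b \<or> P a c \<or> P b c) \<longleftrightarrow>
  \<not> (\<exists>a\<in>V. \<exists>b\<in>V. \<exists>c\<in>V. a \<noteq> b \<and> a \<noteq> c \<and> b \<noteq> c \<and> \<not> P a b \<and> \<not> P a c \<and> \<not> P b c)"
  by auto

theorem proposition4p3:
  fixes n :: nat and A :: "nat multiset set"
  assumes "A \<subseteq> sm n 2"
  shows "(upper_perfect n A \<longleftrightarrow>
            clique_number {1..n} (complement_graph {1..n} (tau n A)) \<le> 2)
       \<and> (lower_perfect n A \<longleftrightarrow>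
            (\<forall>i\<in>{1..n}. degree {1..n} (complement_graph {1..n} (tau n A)) i < n - 1))"
proof
  let ?G = "complement_graph {1..n} (tau n A)"
  have sym: "\<And>x y. ?G x y \<Longrightarrow> ?G y x"
    unfolding complement_graph_def tau_def by (auto simp: add_mset_commute)
  have cg: "\<And>a b. a \<in> {1..n} \<Longrightarrow> b \<in> {1..n} \<Longrightarrow> a \<noteq> b \<Longrightarrow> ?G a b \<longleftrightarrow> {#a,b#} \<notin> A"
    unfolding complement_graph_def tau_def by simp
  have eq: "(\<exists>a\<in>{1..n}. \<exists>b\<in>{1..n}. \<exists>c\<in>{1..n}. a \<noteq> b \<and> a \<noteq> c \<and> b \<noteq> c \<and> ?G a b \<and> ?G a c \<and> ?G b c)
     \<longleftrightarrow> (\<exists>a\<in>{1..n}. \<exists>b\<in>{1..n}. \<exists>c\<in>{1..n}. a \<noteq> b \<and> a \<noteq> c \<and> b \<noteq> c \<and> {#a,b#} \<notin> A \<and> {#a,c#} \<notin> A \<and> {#b,c#} \<notin> A)"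
    (is "?L \<longleftrightarrow> ?R")
  proof
    assume ?L
    then obtain a b c where t: "a\<in>{1..n}" "b\<in>{1..n}" "c\<in>{1..n}" "a \<noteq> b" "a \<noteq> c" "b \<noteq> c" "?G a b" "?G a c" "?G b c" by blast
    then show ?R using cg[of a b] cg[of a c] cg[of b c] by blast
  next
    assume ?R
    then obtain a b c where t: "a\<in>{1..n}" "b\<in>{1..n}" "c\<in>{1..n}" "a \<noteq> b" "a \<noteq> c" "b \<noteq> c" "{#a,b#} \<notin> A" "{#a,c#} \<notin> A" "{#b,c#} \<notin> A" by blast
    then show ?L using cg[of a b] cg[of a c] cg[of b c] by blast
  qed
  have 1: "upper_perfect n A \<longleftrightarrow> (\<forall>a\<in>{1..n}. \<forall>b\<in>{1..n}. \<forall>c\<in>{1..n}.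
           a \<noteq> b \<and> a \<noteq> c \<and> b \<noteq> c \<longrightarrow> {#a,b#} \<in> A \<or> {#a,c#} \<in> A \<or> {#b,c#} \<in> A)"
    by (rule upper_iff[OF assms])
  have 2: "clique_number {1..n} ?G \<le> 2 \<longleftrightarrow> \<not> (\<exists>a\<in>{1..n}. \<exists>b\<in>{1..n}. \<exists>c\<in>{1..n}. a \<noteq> b \<and> a \<noteq> c \<and> b \<noteq> c \<and> ?G a b \<and> ?G a c \<and> ?G b c)"
    by (rule clique_le2, simp, erule sym)
  have 3: "(\<forall>a\<in>{1..n}. \<forall>b\<in>{1..n}. \<forall>c\<in>{1..n}.
           a \<noteq> b \<and> a \<noteq> c \<and> b \<noteq> c \<longrightarrow> {#a,b#} \<in> A \<or> {#a,c#} \<in> A \<or> {#b,c#} \<in> A)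
     \<longleftrightarrow> \<not> (\<exists>a\<in>{1..n}. \<exists>b\<in>{1..n}. \<exists>c\<in>{1..n}. a \<noteq> b \<and> a \<noteq> c \<and> b \<noteq> c \<and> {#a,b#} \<notin> A \<and> {#a,c#} \<notin> A \<and> {#b,c#} \<notin> A)"
    by (rule tri)
  show "upper_perfect n A \<longleftrightarrow> clique_number {1..n} ?G \<le> 2"
    by (simp only: 1 2 3 eq)
  have P: "\<And>i. i \<in> {1..n} \<Longrightarrow> (\<exists>j. {#i,j#} \<in> A) \<longleftrightarrow> (\<exists>j\<in>{1..n}. j \<noteq> i \<and> tau n A i j)"
  proof -
    fix i assume i: "i \<in> {1..n}"
    show "(\<exists>j. {#i,j#} \<in> A) \<longleftrightarrow> (\<exists>j\<in>{1..n}. j \<noteq> i \<and> tau n A i j)"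
    proof
      assume "\<exists>j. {#i,j#} \<in> A"
      then obtain j where j: "{#i,j#} \<in> A" by blast
      then have "{#i,j#} \<in> sm n 2" using assms by blast
      then have c: "count {#i,j#} i \<le> 1" and st: "set_mset {#i,j#} \<subseteq> {1..n}" unfolding sm_def by blast+
      have "j \<noteq> i" using c by (cases "j = i") auto
      moreover have "j \<in> {1..n}" using st by simp
      ultimately have "j \<in> {1..n}" "j \<noteq> i" by auto
      then show "\<exists>j\<in>{1..n}. j \<noteq> i \<and> tau n A i j" using i j unfolding tau_def by auto
    qed (auto simp: tau_def)
  qed
  have H: "\<And>i. i \<in> {1..n} \<Longrightarrow> (\<exists>j. {#i,j#} \<in> A) \<longleftrightarrow> degree {1..n} ?G i < n - 1"
  proof -
    fix i assume i: "i \<in> {1..n}"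
    show "(\<exists>j. {#i,j#} \<in> A) \<longleftrightarrow> degree {1..n} ?G i < n - 1"
      by (rule trans[OF P[OF i] degree_iff[OF i, of "tau n A", symmetric]])
  qed
  show "lower_perfect n A \<longleftrightarrow> (\<forall>i\<in>{1..n}. degree {1..n} ?G i < n - 1)"
    unfolding lower_iff[OF assms]
  proof (intro iffI ballI)
    fix i assume L: "\<forall>i\<in>{1..n}. \<exists>j. {#i,j#} \<in> A" and i: "i \<in> {1..n}"
    then have "\<exists>j. {#i,j#} \<in> A" by blast
    then show "degree {1..n} ?G i < n - 1" using H[OF i] by blast
  next
    fix i assume L: "\<forall>i\<in>{1..n}. degree {1..n} ?G i < n - 1" and i: "i \<in> {1..n}"
    then have "degree {1..n} ?G i < n - 1" by blast
    then show "\<exists>j. {#i,j#} \<in> A" using H[OF i] by blast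
  qed
qed
end
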